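(* Let $\tau_1(x)=\frac{x+1}{x+3}$ and $\tau_2(x)=\frac{2}{4-x}$ on $[0,1]$. For $t>0$ let $A_1(y)=\frac12\left(\log\frac{2}{(y-1)^2}+\log 2\right)$ (used on $\tau_1([0,1])=[1/3,1/2]$) and $A_2(y,t)=\frac12\left(\log\frac{2}{y^2}+\log(2t^2)\right)$ (used on $\tau_2([0,1])=[1/2,2/3]$). Let $V_1(x,t)=\log\left(t\left(2+\sqrt2-\frac{x}{\sqrt2}\right)\right)$, $V_2(x,t)=\log(x+1+\sqrt2)$ and $V(x,t)=\max\{V_1(x,t),V_2(x,t)\}$. If $0<t\le t_1:=\frac{4(4+3\sqrt2)}{18+13\sqrt2}$, then for every $x\in[1/3,2/3]$, $$V(x,t)+\log(2+\sqrt2)=\max\{A_1(\tau_1(x))+V(\tau_1(x),t),\,A_2(\tau_2(x),t)+V(\tau_2(x),t)\},$$ so $V(\cdot,t)$ is a calibrated subaction with maximal value $m(A,t)=\log(2+\sqrt2)$.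
   Context: This potential is associated with the pair of matrices $\begin{pmatrix}2&1\\2&2\end{pmatrix}$ and $t\begin{pmatrix}2&2\\1&2\end{pmatrix}$, whose projective actions on $[0,1]$ are $\tau_1,\tau_2$. *)

theory Defs
  imports Complex_Main
begin

definition tau1 :: "real \<Rightarrow> real" where
  "tau1 x = (x + 1) / (x + 3)"

definition tau2 :: "real \<Rightarrow> real" where
  "tau2 x = 2 / (4 - x)"

definition A1 :: "real \<Rightarrow> real" where
  "A1 y = (ln (2 / (y - 1)^2) + ln 2) / 2"

definition A2 :: "real \<Rightarrow> real \<Rightarrow> real" where
  "A2 y t = (ln (2 / y^2) + ln (2 * t^2)) / 2"

definition V1 :: "real \<Rightarrow> real \<Rightarrow> real" where
  "V1 x t = ln (t * (2 + sqrt 2 - x / sqrt 2))"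

definition V2 :: "real \<Rightarrow> real \<Rightarrow> real" where
  "V2 x t = ln (x + 1 + sqrt 2)"

definition V :: "real \<Rightarrow> real \<Rightarrow> real" where
  "V x t = max (V1 x t) (V2 x t)"

definition t1 :: real where
  "t1 = 4 * (4 + 3 * sqrt 2) / (18 + 13 * sqrt 2)"

end

theory Submission
  imports Defs
begin

lemma A1_tau1: assumes "x \<ge> 0" shows "A1 (tau1 x) = ln (x + 3)"
proof -
  have e: "2 / (tau1 x - 1)^2 = (x+3)^2 / 2" using assms
    by (simp add: tau1_def field_simps power2_eq_square)
  have "ln ((x+3)^2/2) + ln 2 = ln ((x+3)^2)" using assms
    by (simp add: ln_div)
  also have "\<dots> = 2 * ln (x+3)" using assms by (simp add: ln_realpow)
  finally show ?thesis unfolding A1_def e by simp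
qed

lemma A2_tau2: assumes "x \<le> 1" "t > 0" shows "A2 (tau2 x) t = ln (t * (4 - x))"
proof -
  have e: "2 / (tau2 x)^2 = (4 - x)^2 / 2" using assms
    by (simp add: tau2_def field_simps power2_eq_square)
  have "ln ((4 - x)^2/2) + ln (2*t^2) = ln ((t*(4 - x))^2)" using assms
    by (simp add: ln_div ln_mult power_mult_distrib)
  also have "\<dots> = 2 * ln (t*(4-x))" using assms by (simp add: ln_realpow)
  finally show ?thesis unfolding A2_def e by simp
qed

lemma max_ln: "(a::real) > 0 \<Longrightarrow> b > 0 \<Longrightarrow> max (ln a) (ln b) = ln (max a b)"
  using ln_le_cancel_iff[of a b] by (auto simp: max_def)

theorem mainTheorem4:
  fixes t :: real
  assumes "0 < t" and "t \<le> t1"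
  shows "\<forall>x \<in> {1/3..2/3}.
           V x t + ln (2 + sqrt 2) =
           max (A1 (tau1 x) + V (tau1 x) t) (A2 (tau2 x) t + V (tau2 x) t)"
proof
  fix x :: real assume x: "x \<in> {1/3..2/3}"
  define s where "s = sqrt 2"
  have s2: "s * s = 2" unfolding s_def by simp
  have sb: "1.41 < s" "s < 1.42"
  proof -
    show "1.41 < s" unfolding s_def by (rule real_less_rsqrt) (simp add: power2_eq_square)
    have "sqrt 2 < sqrt (1.42^2)" by (subst real_sqrt_less_iff) (simp add: power2_eq_square)
    then show "s < 1.42" unfolding s_def by simp
  qed
  have s2a: "\<And>z. s * (s * z) = 2 * z" using s2 by (metis mult.assoc)
  have sb': "141/100 < s" "s < 142/100" using sb by simp_all
  have x1: "1/3 \<le> x" "x \<le> 2/3" using x by auto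
  define P where "P = 6 + 4*s - (1+s)*x"
  define Q where "Q = (2+s)*x + 4 + 3*s"
  define R where "R = (2 + s/2)*x + 6 + 5*s/2"
  define S where "S = 8 + 3*s - (2+s)*x"
  have Pp: "P > 0" "Q > 0" "R > 0" "S > 0"
  proof -
    have F1: "s*x \<le> s" using sb x1 by (simp add: mult_left_le)
    have F2: "s*x \<ge> 0" using sb x1 by simp
    note F = F1 F2 sb' x1
    show "P > 0" unfolding P_def by (simp add: algebra_simps) (use F in linarith)
    show "Q > 0" unfolding Q_def by (simp add: algebra_simps) (use F in linarith)
    show "R > 0" unfolding R_def by (simp add: algebra_simps) (use F in linarith)
    show "S > 0" unfolding S_def by (simp add: algebra_simps) (use F in linarith)
  qed
  have sp: "s > 0" using sb by simp
  have d1: "2 + s - x / s > 0" using sb x1 s2 by (simp add: field_simps)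
  have iL1: "t * (2 + s - x / s) * (2 + s) = t * P" unfolding P_def using sp s2
    by (simp add: field_simps) (simp add: algebra_simps s2 s2a)
  have L: "V x t + ln (2 + sqrt 2) = ln (max (t*P) Q)"
  proof -
    have "V x t + ln (2+s) = max (ln (t * (2 + s - x / s) * (2 + s))) (ln ((x+1+s)*(2+s)))"
      unfolding V_def V1_def V2_def s_def[symmetric] using d1 sp x1 assms(1)
      by (simp add: ln_mult)
    also have "(x+1+s)*(2+s) = Q" unfolding Q_def by (simp add: algebra_simps s2 s2a)
    finally have "V x t + ln (2+s) = max (ln (t * (2 + s - x / s) * (2 + s))) (ln Q)" .
    then show ?thesis unfolding iL1 s_def[symmetric] using Pp assms(1) by (simp add: max_ln)
  qed
  have y1p: "tau1 x > 0" "tau1 x \<le> 1" using x1 by (simp_all add: tau1_def)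
  have y2p: "tau2 x > 0" "tau2 x \<le> 1" using x1 by (simp_all add: tau2_def)
  have e1: "2 + s - tau1 x / s > 0" using sb y1p s2 by (simp add: field_simps)
  have e2: "2 + s - tau2 x / s > 0" using sb y2p s2 by (simp add: field_simps)
  have ds: "\<And>z. z / s = z * s / 2" using s2 sp by (simp add: field_simps)
  have ty1: "tau1 x * (x+3) = x + 1" using x1 by (simp add: tau1_def)
  have ty2: "tau2 x * (4-x) = 2" using x1 by (simp add: tau2_def field_simps)
  have iR: "t * (2 + s - tau1 x / s) * (x+3) = t * R"
  proof -
    have "t * (2 + s - tau1 x / s) * (x+3) = t * ((2+s)*(x+3) - (tau1 x*(x+3))*s/2)"
      by (simp add: ds algebra_simps)
    also have "\<dots> = t * R" unfolding ty1 R_def by (simp add: field_simps)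
    finally show ?thesis .
  qed
  have iQ: "(tau1 x + 1 + s) * (x+3) = Q"
  proof -
    have "(tau1 x + 1 + s) * (x+3) = tau1 x * (x+3) + (1+s)*(x+3)" by (simp add: algebra_simps)
    also have "\<dots> = Q" unfolding ty1 Q_def by (simp add: field_simps)
    finally show ?thesis .
  qed
  have iS: "t * (2 + s - tau2 x / s) * (t*(4-x)) = t * t * S"
  proof -
    have "t * (2 + s - tau2 x / s) * (t*(4-x)) = t * t * ((2+s)*(4-x) - (tau2 x*(4-x))*s/2)"
      by (simp add: ds algebra_simps)
    also have "\<dots> = t * t * S" unfolding ty2 S_def by (simp add: field_simps)
    finally show ?thesis .
  qed
  have iP: "(tau2 x + 1 + s) * (t*(4-x)) = t * P"
  proof -
    have "(tau2 x + 1 + s) * (t*(4-x)) = t * (tau2 x * (4-x) + (1+s)*(4-x))" by (simp add: algebra_simps)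
    also have "\<dots> = t * P" unfolding ty2 P_def by (simp add: field_simps)
    finally show ?thesis .
  qed
  have B1: "A1 (tau1 x) + V (tau1 x) t = ln (max (t*R) Q)"
  proof -
    have "A1 (tau1 x) + V (tau1 x) t = max (ln (t * (2 + s - tau1 x / s) * (x+3))) (ln ((tau1 x + 1 + s) * (x+3)))"
      unfolding V_def V1_def V2_def s_def[symmetric] A1_tau1[OF order_trans[OF _ x1(1)], simplified]
      using e1 sp x1 y1p assms(1) by (simp add: ln_mult)
    then show ?thesis unfolding iR iQ using Pp assms(1) by (simp add: max_ln)
  qed
  have B2: "A2 (tau2 x) t + V (tau2 x) t = ln (max (t*t*S) (t*P))"
  proof -
    have "A2 (tau2 x) t + V (tau2 x) t = max (ln (t * (2 + s - tau2 x / s) * (t*(4-x)))) (ln ((tau2 x + 1 + s) * (t*(4-x))))"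
      unfolding V_def V1_def V2_def s_def[symmetric] using x1 assms(1)
      apply (subst A2_tau2) apply simp apply simp
      using e2 sp x1 y2p assms(1) by (simp add: ln_mult)
    then show ?thesis unfolding iS iP using Pp assms(1) by (simp add: max_ln)
  qed
  have t1s: "t1 = 4 * (4 + 3 * s) / (18 + 13 * s)" unfolding t1_def s_def ..
  have tle: "t * (18 + 13 * s) \<le> 4 * (4 + 3 * s)" using assms(2) sp unfolding t1s
    by (simp add: field_simps)
  have c1: "t*R \<le> max (t*P) Q"
  proof (cases "x * (2+s) \<le> s")
    case True
    then have "R \<le> P" unfolding R_def P_def by (simp add: algebra_simps)
    then have "t*R \<le> t*P" using assms(1) by (simp add: mult_left_mono)
    then show ?thesis by simp
  next
    case False
    have "(18 + 13 * s) * (t * R) \<le> 4 * (4 + 3 * s) * R"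
      using mult_right_mono[OF tle, of R] Pp by (simp add: algebra_simps)
    also have "\<dots> \<le> (18 + 13 * s) * Q"
    proof -
      have "4 * (4 + 3 * s) * R - (18 + 13 * s) * Q = (4+3*s)*(6-3*s) - (18 + 12*s)*x"
        unfolding R_def Q_def by (simp add: algebra_simps s2 s2a)
      moreover have "(4+3*s)*(6-3*s) = (18 + 12*s) * (s/(2+s))"
        using sp by (simp add: field_simps) (simp add: algebra_simps s2 s2a)
      moreover have "s/(2+s) < x" using False sp by (simp add: field_simps)
      then have "(18 + 12*s) * (s/(2+s)) \<le> (18 + 12*s) * x" using sp by (intro mult_left_mono) auto
      ultimately show ?thesis by linarith
    qed
    finally have "t*R \<le> Q" using sp by simp
    then show ?thesis by simp
  qed
  have c2: "t*t*S \<le> t*P"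
  proof -
    have "t * S \<le> P"
    proof -
      have "(18 + 13 * s) * (t * S) \<le> 4 * (4 + 3 * s) * S"
        using mult_right_mono[OF tle, of S] Pp by (simp add: algebra_simps)
      also have "\<dots> \<le> (18 + 13 * s) * P"
      proof -
        have "4 * (4 + 3 * s) * S - (18 + 13 * s) * P = -12 - 6*s - (12 + 9*s)*x"
          unfolding S_def P_def by (simp add: algebra_simps s2 s2a)
        moreover have "(12 + 9*s)*x \<ge> 0" using sp x1 by simp
        ultimately show ?thesis using sp by linarith
      qed
      finally show ?thesis using sp by simp
    qed
    then show ?thesis using assms(1) by (simp add: mult_left_mono mult.assoc)
  qed
  show "V x t + ln (2 + sqrt 2) = max (A1 (tau1 x) + V (tau1 x) t) (A2 (tau2 x) t + V (tau2 x) t)"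
    unfolding L B1 B2 using Pp assms(1) c1 c2 by (simp add: max_ln mult_pos_pos)
qed

end
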